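(* Let $R$ be a ring with identity and $a,b,c,y\in R$. Then: (i) $y$ is both a right $(b,c)$-inverse and a right annihilator $(b,c)$-inverse of $a$ if and only if $y$ is the hybrid $(b,c)$-inverse of $a$, i.e. $yay=y$, $yR=bR$ and $y^\circ=c^\circ$; (ii) $y$ is both a left $(b,c)$-inverse and a left annihilator $(b,c)$-inverse of $a$ if and only if $yay=y$, ${}^\circ b={}^\circ y$ and $Rc=Ry$.
   Context: For $x\in R$: $xR=\{xr:r\in R\}$, $Rx=\{rx:r\in R\}$, $x^\circ=\{r: xr=0\}$, ${}^\circ x=\{r: rx=0\}$. $y$ is a left $(b,c)$-inverse of $a$ if $Ry\subseteq Rc$ and $yab=b$; a right $(b,c)$-inverse if $yR\subseteq bR$ and $cay=c$; a right annihilator $(b,c)$-inverse if $c^\circ\subseteq y^\circ$ and $yab=b$; a left annihilator $(b,c)$-inverse if ${}^\circ b\subseteq {}^\circ y$ and $cay=c$. *)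

theory Defs
  imports Main
begin

definition rprin :: "'a::ring_1 \<Rightarrow> 'a set" where "rprin x = {x * r | r. True}"
definition lprin :: "'a::ring_1 \<Rightarrow> 'a set" where "lprin x = {r * x | r. True}"
definition rann :: "'a::ring_1 \<Rightarrow> 'a set" where "rann x = {r. x * r = 0}"
definition lann :: "'a::ring_1 \<Rightarrow> 'a set" where "lann x = {r. r * x = 0}"

definition left_bc_inverse :: "'a::ring_1 \<Rightarrow> 'a \<Rightarrow> 'a \<Rightarrow> 'a \<Rightarrow> bool" where
  "left_bc_inverse y a b c \<longleftrightarrow> lprin y \<subseteq> lprin c \<and> y * a * b = b"
definition right_bc_inverse :: "'a::ring_1 \<Rightarrow> 'a \<Rightarrow> 'a \<Rightarrow> 'a \<Rightarrow> bool" where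
  "right_bc_inverse y a b c \<longleftrightarrow> rprin y \<subseteq> rprin b \<and> c * a * y = c"
definition right_ann_bc_inverse :: "'a::ring_1 \<Rightarrow> 'a \<Rightarrow> 'a \<Rightarrow> 'a \<Rightarrow> bool" where
  "right_ann_bc_inverse y a b c \<longleftrightarrow> rann c \<subseteq> rann y \<and> y * a * b = b"
definition left_ann_bc_inverse :: "'a::ring_1 \<Rightarrow> 'a \<Rightarrow> 'a \<Rightarrow> 'a \<Rightarrow> bool" where
  "left_ann_bc_inverse y a b c \<longleftrightarrow> lann b \<subseteq> lann y \<and> c * a * y = c"

definition hybrid_bc_inverse :: "'a::ring_1 \<Rightarrow> 'a \<Rightarrow> 'a \<Rightarrow> 'a \<Rightarrow> bool" where
  "hybrid_bc_inverse y a b c \<longleftrightarrow> y * a * y = y \<and> rprin y = rprin b \<and> rann y = rann c"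

end

theory Submission
  imports Defs
begin

lemma part1:
  fixes a b c y :: "'a::ring_1"
  shows "right_bc_inverse y a b c \<and> right_ann_bc_inverse y a b c \<longleftrightarrow> hybrid_bc_inverse y a b c"
proof
  assume A: "right_bc_inverse y a b c \<and> right_ann_bc_inverse y a b c"
  hence s1: "rprin y \<subseteq> rprin b" and s2: "c * a * y = c" and s3: "rann c \<subseteq> rann y"
    and s4: "y * a * b = b"
    by (auto simp: right_bc_inverse_def right_ann_bc_inverse_def)
  have "y \<in> rprin y" unfolding rprin_def by (auto intro: exI[of _ 1])
  with s1 obtain r where r: "y = b * r" unfolding rprin_def by auto
  have yay: "y * a * y = y" using r s4 by (metis mult.assoc)
  have "rprin b \<subseteq> rprin y"
  proof
    fix x assume "x \<in> rprin b"
    then obtain t where "x = b * t" unfolding rprin_def by auto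
    hence "x = y * (a * b * t)" using s4 by (metis mult.assoc)
    thus "x \<in> rprin y" unfolding rprin_def by auto
  qed
  moreover have "rann y \<subseteq> rann c"
  proof
    fix x assume "x \<in> rann y"
    hence "y * x = 0" unfolding rann_def by auto
    hence "c * x = 0" using s2 by (metis mult.assoc mult_zero_right)
    thus "x \<in> rann c" unfolding rann_def by auto
  qed
  ultimately show "hybrid_bc_inverse y a b c" using yay s1 s3
    unfolding hybrid_bc_inverse_def by auto
next
  assume "hybrid_bc_inverse y a b c"
  hence yay: "y * a * y = y" and e1: "rprin y = rprin b" and e2: "rann y = rann c"
    unfolding hybrid_bc_inverse_def by auto
  have "b \<in> rprin b" unfolding rprin_def by (auto intro: exI[of _ 1])
  with e1 obtain s where s: "b = y * s" unfolding rprin_def by auto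
  have yab: "y * a * b = b" using s yay by (metis mult.assoc)
  have "y * (a * y - 1) = 0" using yay by (simp add: right_diff_distrib mult.assoc)
  hence "a * y - 1 \<in> rann c" using e2 unfolding rann_def by auto
  hence "c * (a * y - 1) = 0" unfolding rann_def by auto
  hence "c * a * y = c" by (simp add: right_diff_distrib mult.assoc)
  thus "right_bc_inverse y a b c \<and> right_ann_bc_inverse y a b c"
    using e1 e2 yab unfolding right_bc_inverse_def right_ann_bc_inverse_def by auto
qed

lemma part2:
  fixes a b c y :: "'a::ring_1"
  shows "left_bc_inverse y a b c \<and> left_ann_bc_inverse y a b c \<longleftrightarrow>
            y * a * y = y \<and> lann b = lann y \<and> lprin c = lprin y"
proof
  assume A: "left_bc_inverse y a b c \<and> left_ann_bc_inverse y a b c"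
  hence s1: "lprin y \<subseteq> lprin c" and s2: "c * a * y = c" and s3: "lann b \<subseteq> lann y"
    and s4: "y * a * b = b"
    by (auto simp: left_bc_inverse_def left_ann_bc_inverse_def)
  have "y \<in> lprin y" unfolding lprin_def by (auto intro: exI[of _ 1])
  with s1 obtain r where r: "y = r * c" unfolding lprin_def by auto
  have yay: "y * a * y = y" using r s2 by (metis mult.assoc)
  have "lprin c \<subseteq> lprin y"
  proof
    fix x assume "x \<in> lprin c"
    then obtain t where "x = t * c" unfolding lprin_def by auto
    hence "x = (t * c * a) * y" using s2 by (metis mult.assoc)
    thus "x \<in> lprin y" unfolding lprin_def by auto
  qed
  moreover have "lann y \<subseteq> lann b"
  proof
    fix x assume "x \<in> lann y"
    hence "x * y = 0" unfolding lann_def by auto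
    hence "x * b = 0" using s4 by (metis mult.assoc mult_zero_left)
    thus "x \<in> lann b" unfolding lann_def by auto
  qed
  ultimately show "y * a * y = y \<and> lann b = lann y \<and> lprin c = lprin y"
    using yay s1 s3 by auto
next
  assume "y * a * y = y \<and> lann b = lann y \<and> lprin c = lprin y"
  hence yay: "y * a * y = y" and e1: "lprin c = lprin y" and e2: "lann b = lann y"
    by auto
  have "c \<in> lprin c" unfolding lprin_def by (auto intro: exI[of _ 1])
  with e1 obtain s where s: "c = s * y" unfolding lprin_def by auto
  have cay: "c * a * y = c" using s yay by (metis mult.assoc)
  have "(y * a - 1) * y = 0" using yay by (simp add: left_diff_distrib mult.assoc)
  hence "y * a - 1 \<in> lann b" using e2 unfolding lann_def by auto
  hence "(y * a - 1) * b = 0" unfolding lann_def by auto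
  hence "y * a * b = b" by (simp add: left_diff_distrib mult.assoc)
  thus "left_bc_inverse y a b c \<and> left_ann_bc_inverse y a b c"
    using e1 e2 cay unfolding left_bc_inverse_def left_ann_bc_inverse_def by auto
qed

theorem theorem2p10:
  fixes a b c y :: "'a::ring_1"
  shows "(right_bc_inverse y a b c \<and> right_ann_bc_inverse y a b c \<longleftrightarrow> hybrid_bc_inverse y a b c)
       \<and> (left_bc_inverse y a b c \<and> left_ann_bc_inverse y a b c \<longleftrightarrow>
            y * a * y = y \<and> lann b = lann y \<and> lprin c = lprin y)"
  using part1 part2 by blast

end
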